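(* Let $(\mathcal{X},\mathfrak{X})$ and $(\mathcal{Y},\mathfrak{Y})$ be measurable spaces, let $\mu$ be a finite measure on $(\mathcal{X}\times\mathcal{Y},\mathfrak{X}\times\mathfrak{Y})$, let $f$ be a real-valued $\mu$-integrable function, and let $\nu$ be a finite measure on the same space with $\nu\ll\mu$. Then for every $\epsilon>0$ there exist a finite sub-$\sigma$-algebra $\mathfrak{C}$ of $\mathfrak{X}$ and a finite sub-$\sigma$-algebra $\mathfrak{D}$ of $\mathfrak{Y}$ such that \[ \nu\{|\mu^{\mathfrak{F}}f-f|\ge\epsilon\}<\epsilon \] for every $\sigma$-algebra $\mathfrak{F}$ with $\mathfrak{C}\times\mathfrak{D}\subseteq\mathfrak{F}\subseteq\mathfrak{X}\times\mathfrak{Y}$.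
   Context: For a finite measure $\lambda$ on $(\mathcal{Z},\mathfrak{Z})$, a $\lambda$-integrable $f$ and a sub-$\sigma$-algebra $\mathfrak{F}$, $\lambda^{\mathfrak{F}}f$ denotes the Radon–Nikodym derivative $\mathrm{d}(f\cdot\lambda)|_{\mathfrak{F}}/\mathrm{d}\lambda|_{\mathfrak{F}}$, where $(f\cdot\lambda)(A)=\int_A f\,\mathrm{d}\lambda$. $\mathfrak{C}\times\mathfrak{D}$ denotes the product $\sigma$-algebra. *)

theory Defs
  imports "HOL-Probability.Probability"
begin

end

theory Submission
  imports Defs
begin

lemma finite_sigma_sets_fin:
  assumes "finite S" "S \<subseteq> Pow \<Omega>"
  shows "finite (sigma_sets \<Omega> S)"
proof -
  define sig where "sig x = {s\<in>S. x \<in> s}" for x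
  define compat where "compat A \<longleftrightarrow> (\<forall>x y. x\<in>\<Omega> \<longrightarrow> y\<in>\<Omega> \<longrightarrow> sig x = sig y \<longrightarrow> x\<in>A \<longrightarrow> y\<in>A)" for A
  define Sat where "Sat = {A. A \<subseteq> \<Omega> \<and> compat A}"
  have sub: "sigma_sets \<Omega> S \<subseteq> Sat"
  proof
    fix A assume "A \<in> sigma_sets \<Omega> S"
    then show "A \<in> Sat"
    proof induct
      case (Basic a)
      have "a \<subseteq> \<Omega>" using Basic assms(2) by auto
      moreover have "compat a" unfolding compat_def
      proof (intro allI impI)
        fix x y assume "sig x = sig y" "x \<in> a"
        then have "a \<in> sig y" using Basic unfolding sig_def by auto
        then show "y \<in> a" unfolding sig_def by auto
      qed
      ultimately show ?case unfolding Sat_def by auto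
    next
      case Empty then show ?case unfolding Sat_def compat_def by auto
    next
      case (Compl a)
      have "compat (\<Omega> - a)" unfolding compat_def
      proof (intro allI impI)
        fix x y assume "x \<in> \<Omega>" "y \<in> \<Omega>" "sig x = sig y" "x \<in> \<Omega> - a"
        moreover have ca: "compat a" using Compl(2) unfolding Sat_def by simp
        moreover have "y \<in> a \<Longrightarrow> x \<in> a"
          using compat_def[THEN iffD1, OF ca, rule_format, of y x] calculation by simp
        ultimately show "y \<in> \<Omega> - a" by auto
      qed
      then show ?case unfolding Sat_def by auto
    next
      case (Union a)
      have "(\<Union>i. a i) \<subseteq> \<Omega>" using Union unfolding Sat_def by auto
      moreover have "compat (\<Union>i. a i)" unfolding compat_def
      proof (intro allI impI)
        fix x y assume xy: "x \<in> \<Omega>" "y \<in> \<Omega>" "sig x = sig y" "x \<in> (\<Union>i. a i)"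
        then obtain i where "x \<in> a i" by auto
        moreover have "compat (a i)" using Union unfolding Sat_def by auto
        ultimately have "y \<in> a i" using compat_def[THEN iffD1, OF \<open>compat (a i)\<close>, rule_format, of x y] xy by simp
        then show "y \<in> (\<Union>i. a i)" by auto
      qed
      ultimately show ?case unfolding Sat_def by auto
    qed
  qed
  have AB: "x \<in> Y" if "x \<in> X" "X \<in> Sat" "Y \<in> Sat" "sig ` X = sig ` Y" for X Y x
  proof -
    have "sig x \<in> sig ` Y" using that by (metis imageI)
    then obtain y where y: "y \<in> Y" "sig x = sig y" by auto
    have "x \<in> \<Omega>" "y \<in> \<Omega>" using that y unfolding Sat_def by auto
    moreover have "compat Y" using that(3) unfolding Sat_def by auto
    ultimately show ?thesis using compat_def[THEN iffD1, OF \<open>compat Y\<close>, rule_format, of y x] y(1) y(2)[symmetric] by simp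
  qed
  have inj: "inj_on (\<lambda>A. sig ` A) Sat"
  proof (rule inj_onI)
    fix A B assume A: "A \<in> Sat" and B: "B \<in> Sat" and eq: "sig ` A = sig ` B"
    show "A = B" using AB[OF _ A B eq] AB[OF _ B A eq[symmetric]] by auto
  qed
  have "(\<lambda>A. sig ` A) ` Sat \<subseteq> Pow (Pow S)" unfolding sig_def by auto
  then have "finite ((\<lambda>A. sig ` A) ` Sat)" using assms(1) by (meson finite_Pow_iff finite_subset)
  then have "finite Sat" using inj finite_imageD by blast
  then show ?thesis using sub finite_subset by blast
qed
lemma ac_eps_delta:
  assumes fm: "finite_measure \<mu>" and fn: "finite_measure \<nu>" and ss: "sets \<nu> = sets \<mu>"
    and ac: "absolutely_continuous \<mu> \<nu>" and e: "\<epsilon> > (0::real)"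
  shows "\<exists>\<delta>>0. \<forall>A\<in>sets \<mu>. measure \<mu> A < \<delta> \<longrightarrow> measure \<nu> A < \<epsilon>"
proof (rule ccontr)
  assume "\<not> ?thesis"
  then have "\<forall>n. \<exists>A\<in>sets \<mu>. measure \<mu> A < (1/2)^n \<and> measure \<nu> A \<ge> \<epsilon>"
    by (metis not_less zero_less_divide_1_iff zero_less_numeral zero_less_power)
  then obtain A where A: "\<And>n. A n \<in> sets \<mu>" "\<And>n. measure \<mu> (A n) < (1/2)^n" "\<And>n. measure \<nu> (A n) \<ge> \<epsilon>"
    by metis
  interpret M: finite_measure \<mu> by fact
  interpret N: finite_measure \<nu> by fact
  have "summable (\<lambda>n. measure \<mu> (A n))"
    by (rule summable_comparison_test[of _ "\<lambda>n. (1/2)^n"]) (use A(2) in \<open>auto intro!: exI[of _ 0] less_imp_le\<close>)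
  then have nul: "limsup A \<in> null_sets \<mu>"
    by (intro borel_cantelli_limsup1) (auto simp: A(1) M.emeasure_real less_top[symmetric])
  then have "limsup A \<in> null_sets \<nu>" using ac unfolding absolutely_continuous_def by auto
  then have z: "measure \<nu> (limsup A) = 0" by (simp add: measure_def null_setsD1)
  define B where "B m = (\<Union>n\<in>{m..}. A n)" for m
  have Bs: "range B \<subseteq> sets \<nu>" unfolding B_def using A(1) ss by auto
  have "decseq B" unfolding B_def decseq_def by (auto intro: order_trans)
  then have lim: "(\<lambda>m. measure \<nu> (B m)) \<longlonglongrightarrow> measure \<nu> (\<Inter>m. B m)"
    using N.finite_Lim_measure_decseq Bs by blast
  have "(\<Inter>m. B m) = limsup A" unfolding B_def limsup_INF_SUP by auto
  with lim z have lim0: "(\<lambda>m. measure \<nu> (B m)) \<longlonglongrightarrow> 0" by simp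
  have "measure \<nu> (B m) \<ge> \<epsilon>" for m
  proof -
    have "measure \<nu> (A m) \<le> measure \<nu> (B m)"
      by (rule N.finite_measure_mono) (use Bs in \<open>auto simp: B_def\<close>)
    then show ?thesis using A(3)[of m] by linarith
  qed
  then have "\<epsilon> \<le> 0" using lim0 by (intro LIMSEQ_le_const[OF lim0]) auto
  then show False using e by simp
qed

definition rects :: "'a set set \<Rightarrow> 'b set set \<Rightarrow> ('a \<times> 'b) set set" where
  "rects S T = {a \<times> b | a b. a \<in> S \<and> b \<in> T}"

lemma rects_mono: "S \<subseteq> S' \<Longrightarrow> T \<subseteq> T' \<Longrightarrow> rects S T \<subseteq> rects S' T'"
  unfolding rects_def by blast

lemma rects_pow: "S \<subseteq> sets M1 \<Longrightarrow> T \<subseteq> sets M2 \<Longrightarrow> rects S T \<subseteq> Pow (space M1 \<times> space M2)"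
proof
  fix x assume ST: "S \<subseteq> sets M1" "T \<subseteq> sets M2" and "x \<in> rects S T"
  then obtain a b where ab: "x = a \<times> b" "a \<in> S" "b \<in> T" unfolding rects_def by blast
  have "a \<subseteq> space M1" using ab(2) ST(1) sets.sets_into_space by blast
  moreover have "b \<subseteq> space M2" using ab(3) ST(2) sets.sets_into_space by blast
  ultimately show "x \<in> Pow (space M1 \<times> space M2)" using ab(1) by auto
qed

definition approx_set where
  "approx_set M1 M2 \<mu> A \<longleftrightarrow> (\<forall>\<eta>>0. \<exists>S T B. finite S \<and> S \<subseteq> sets M1 \<and> finite T \<and> T \<subseteq> sets M2 \<and>
      B \<in> sigma_sets (space M1 \<times> space M2) (rects S T) \<and> measure \<mu> ((A - B) \<union> (B - A)) < \<eta>)"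

lemma approx_setD:
  assumes "approx_set M1 M2 \<mu> A" "\<eta> > 0"
  obtains S T B where "finite S" "S \<subseteq> sets M1" "finite T" "T \<subseteq> sets M2"
      "B \<in> sigma_sets (space M1 \<times> space M2) (rects S T)" "measure \<mu> ((A - B) \<union> (B - A)) < \<eta>"
proof -
  have "\<exists>S T B. finite S \<and> S \<subseteq> sets M1 \<and> finite T \<and> T \<subseteq> sets M2 \<and>
      B \<in> sigma_sets (space M1 \<times> space M2) (rects S T) \<and> measure \<mu> ((A - B) \<union> (B - A)) < \<eta>"
    using assms unfolding approx_set_def by simp
  then show ?thesis using that by blast
qed
lemma approx_setI:
  assumes "\<And>\<eta>. \<eta> > 0 \<Longrightarrow> \<exists>S T B. finite S \<and> S \<subseteq> sets M1 \<and> finite T \<and> T \<subseteq> sets M2 \<and>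
      B \<in> sigma_sets (space M1 \<times> space M2) (rects S T) \<and> measure \<mu> ((A - B) \<union> (B - A)) < \<eta>"
  shows "approx_set M1 M2 \<mu> A"
  using assms unfolding approx_set_def by simp

lemma set_approx:
  assumes sets_mu: "sets \<mu> = sets (M1 \<Otimes>\<^sub>M M2)" and fin: "finite_measure \<mu>"
    and A: "A \<in> sets \<mu>"
  shows "approx_set M1 M2 \<mu> A"
proof -
  interpret finite_measure \<mu> by fact
  define \<Omega> where "\<Omega> = space M1 \<times> space M2"
  have sets_eq: "sets \<mu> = sigma_sets \<Omega> (rects (sets M1) (sets M2))"
    unfolding sets_mu sets_pair_measure \<Omega>_def rects_def by (rule refl)
  have sub: "sigma_sets \<Omega> (rects S T) \<subseteq> sets \<mu>" if "S \<subseteq> sets M1" "T \<subseteq> sets M2" for S T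
    unfolding sets_eq by (rule sigma_sets_subseteq[OF rects_mono[OF that]])
  from A have "A \<in> sigma_sets \<Omega> (rects (sets M1) (sets M2))" unfolding sets_eq .
  then show ?thesis
  proof induct
    case (Basic a)
    then obtain a1 a2 where a: "a = a1 \<times> a2" "a1 \<in> sets M1" "a2 \<in> sets M2" unfolding rects_def by blast
    show ?case
    proof (rule approx_setI)
      fix \<eta> :: real assume "\<eta> > 0"
      have "a \<in> sigma_sets (space M1 \<times> space M2) (rects {a1} {a2})"
        using a by (intro sigma_sets.Basic) (auto simp: rects_def)
      then show "\<exists>S T B. finite S \<and> S \<subseteq> sets M1 \<and> finite T \<and> T \<subseteq> sets M2 \<and>
      B \<in> sigma_sets (space M1 \<times> space M2) (rects S T) \<and> measure \<mu> ((a - B) \<union> (B - a)) < \<eta>"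
        using a \<open>\<eta> > 0\<close> by (intro exI[of _ "{a1}"] exI[of _ "{a2}"] exI[of _ a]) auto
    qed
  next
    case Empty
    show ?case
    proof (rule approx_setI)
      fix \<eta> :: real assume "\<eta> > 0"
      then show "\<exists>S T B. finite S \<and> S \<subseteq> sets M1 \<and> finite T \<and> T \<subseteq> sets M2 \<and>
      B \<in> sigma_sets (space M1 \<times> space M2) (rects S T) \<and> measure \<mu> (({} - B) \<union> (B - {})) < \<eta>"
        by (intro exI[of _ "{}"] exI[of _ "{}"] exI[of _ "{}"]) (auto intro: sigma_sets.Empty)
    qed
  next
    case (Compl a)
    have a\<mu>: "a \<in> sets \<mu>" using Compl(1) sets_eq by simp
    show ?case
    proof (rule approx_setI)
      fix \<eta> :: real assume "\<eta> > 0"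
      obtain S T B where STB: "finite S" "S \<subseteq> sets M1" "finite T" "T \<subseteq> sets M2"
        "B \<in> sigma_sets (space M1 \<times> space M2) (rects S T)" "measure \<mu> ((a - B) \<union> (B - a)) < \<eta>"
        by (rule approx_setD[OF Compl(2) \<open>\<eta> > 0\<close>])
      have B\<mu>: "B \<in> sets \<mu>" using sub[OF STB(2,4)] STB(5) unfolding \<Omega>_def by auto
      have C: "\<Omega> - B \<in> sigma_sets (space M1 \<times> space M2) (rects S T)"
        using STB(5) unfolding \<Omega>_def by (rule sigma_sets.Compl)
      have "measure \<mu> (((\<Omega> - a) - (\<Omega> - B)) \<union> ((\<Omega> - B) - (\<Omega> - a))) \<le> measure \<mu> ((a - B) \<union> (B - a))"
        by (rule finite_measure_mono) (use a\<mu> B\<mu> in auto)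
      then have lt: "measure \<mu> (((\<Omega> - a) - (\<Omega> - B)) \<union> ((\<Omega> - B) - (\<Omega> - a))) < \<eta>" using STB(6) by linarith
      then show "\<exists>S T B. finite S \<and> S \<subseteq> sets M1 \<and> finite T \<and> T \<subseteq> sets M2 \<and>
      B \<in> sigma_sets (space M1 \<times> space M2) (rects S T) \<and> measure \<mu> (((\<Omega> - a) - B) \<union> (B - (\<Omega> - a))) < \<eta>"
        using STB(1-4) C lt by blast
    qed
  next
    case (Union a)
    have a\<mu>: "a i \<in> sets \<mu>" for i using Union(1) sets_eq by simp
    show ?case
    proof (rule approx_setI)
      fix \<eta> :: real assume "\<eta> > 0"
      define U where "U n = (\<Union>i<n. a i)" for n
      have U\<mu>: "range U \<subseteq> sets \<mu>" unfolding U_def using a\<mu> by auto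
      have "incseq U" unfolding U_def incseq_def by (metis UN_mono lessThan_subset_iff order_refl)
      then have lim: "(\<lambda>n. measure \<mu> (U n)) \<longlonglongrightarrow> measure \<mu> (\<Union>n. U n)"
        using finite_Lim_measure_incseq U\<mu> by blast
      have UU: "(\<Union>n. U n) = (\<Union>i. a i)" unfolding U_def by auto
      obtain N0 where N0: "\<And>n. n \<ge> N0 \<Longrightarrow> norm (measure \<mu> (U n) - measure \<mu> (\<Union>i. a i)) < \<eta>/2"
        using LIMSEQ_D[OF lim, of "\<eta>/2"] \<open>\<eta> > 0\<close> UU by auto
      define N where "N = Suc N0"
      have Npos: "N > 0" unfolding N_def by simp
      have "norm (measure \<mu> (U N) - measure \<mu> (\<Union>i. a i)) < \<eta>/2" using N0[of N] unfolding N_def by simp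
      then have N: "measure \<mu> (\<Union>i. a i) - measure \<mu> (U N) < \<eta>/2" unfolding real_norm_def by arith
      define \<eta>' where "\<eta>' = \<eta> / (2 * N)"
      have \<eta>': "\<eta>' > 0" unfolding \<eta>'_def using \<open>\<eta> > 0\<close> Npos by simp
      have "\<forall>i. \<exists>S T B. finite S \<and> S \<subseteq> sets M1 \<and> finite T \<and> T \<subseteq> sets M2 \<and>
        B \<in> sigma_sets (space M1 \<times> space M2) (rects S T) \<and> measure \<mu> ((a i - B) \<union> (B - a i)) < \<eta>'"
      proof
        fix i
        obtain S T B where "finite S" "S \<subseteq> sets M1" "finite T" "T \<subseteq> sets M2"
          "B \<in> sigma_sets (space M1 \<times> space M2) (rects S T)" "measure \<mu> ((a i - B) \<union> (B - a i)) < \<eta>'"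
          by (rule approx_setD[OF Union(2) \<eta>'])
        then show "\<exists>S T B. finite S \<and> S \<subseteq> sets M1 \<and> finite T \<and> T \<subseteq> sets M2 \<and>
        B \<in> sigma_sets (space M1 \<times> space M2) (rects S T) \<and> measure \<mu> ((a i - B) \<union> (B - a i)) < \<eta>'"
          by blast
      qed
      then have "\<exists>SS. \<forall>i. \<exists>T B. finite (SS i) \<and> SS i \<subseteq> sets M1 \<and> finite T \<and> T \<subseteq> sets M2 \<and>
        B \<in> sigma_sets (space M1 \<times> space M2) (rects (SS i) T) \<and> measure \<mu> ((a i - B) \<union> (B - a i)) < \<eta>'"
        by (rule choice)
      then obtain SS where "\<forall>i. \<exists>T B. finite (SS i) \<and> SS i \<subseteq> sets M1 \<and> finite T \<and> T \<subseteq> sets M2 \<and>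
        B \<in> sigma_sets (space M1 \<times> space M2) (rects (SS i) T) \<and> measure \<mu> ((a i - B) \<union> (B - a i)) < \<eta>'" ..
      then have "\<exists>TT. \<forall>i. \<exists>B. finite (SS i) \<and> SS i \<subseteq> sets M1 \<and> finite (TT i) \<and> TT i \<subseteq> sets M2 \<and>
        B \<in> sigma_sets (space M1 \<times> space M2) (rects (SS i) (TT i)) \<and> measure \<mu> ((a i - B) \<union> (B - a i)) < \<eta>'"
        by (rule choice)
      then obtain TT where "\<forall>i. \<exists>B. finite (SS i) \<and> SS i \<subseteq> sets M1 \<and> finite (TT i) \<and> TT i \<subseteq> sets M2 \<and>
        B \<in> sigma_sets (space M1 \<times> space M2) (rects (SS i) (TT i)) \<and> measure \<mu> ((a i - B) \<union> (B - a i)) < \<eta>'" ..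
      then have "\<exists>BB. \<forall>i. finite (SS i) \<and> SS i \<subseteq> sets M1 \<and> finite (TT i) \<and> TT i \<subseteq> sets M2 \<and>
        BB i \<in> sigma_sets (space M1 \<times> space M2) (rects (SS i) (TT i)) \<and> measure \<mu> ((a i - BB i) \<union> (BB i - a i)) < \<eta>'"
        by (rule choice)
      then obtain BB where BB: "\<forall>i. finite (SS i) \<and> SS i \<subseteq> sets M1 \<and> finite (TT i) \<and> TT i \<subseteq> sets M2 \<and>
        BB i \<in> sigma_sets (space M1 \<times> space M2) (rects (SS i) (TT i)) \<and> measure \<mu> ((a i - BB i) \<union> (BB i - a i)) < \<eta>'" ..
      have STB: "\<And>i. finite (SS i)" "\<And>i. SS i \<subseteq> sets M1" "\<And>i. finite (TT i)" "\<And>i. TT i \<subseteq> sets M2"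
        "\<And>i. BB i \<in> sigma_sets (space M1 \<times> space M2) (rects (SS i) (TT i))"
        "\<And>i. measure \<mu> ((a i - BB i) \<union> (BB i - a i)) < \<eta>'"
        using BB by simp_all
      define S where "S = (\<Union>i<N. SS i)"
      define T where "T = (\<Union>i<N. TT i)"
      define B where "B = (\<Union>i<N. BB i)"
      have S: "finite S" "S \<subseteq> sets M1" unfolding S_def using STB(1) apply simp using STB(2) by blast
      have T: "finite T" "T \<subseteq> sets M2" unfolding T_def using STB(3) apply simp using STB(4) by blast
      have BBi: "BB i \<in> sigma_sets (space M1 \<times> space M2) (rects S T)" if "i < N" for i
      proof -
        have "rects (SS i) (TT i) \<subseteq> rects S T" unfolding S_def T_def using that by (intro rects_mono) auto
        then show ?thesis using sigma_sets_subseteq STB(5)[of i] by blast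
      qed
      have sa: "sigma_algebra (space M1 \<times> space M2) (sigma_sets (space M1 \<times> space M2) (rects S T))"
        by (rule sigma_algebra_sigma_sets[OF rects_pow[OF S(2) T(2)]])
      have B: "B \<in> sigma_sets (space M1 \<times> space M2) (rects S T)"
        unfolding B_def by (rule ring_of_sets.finite_UN[OF sigma_algebra.axioms(1)[OF sa, THEN algebra.axioms(1)]]) (use BBi in auto)
      have BB\<mu>: "BB i \<in> sets \<mu>" for i using sub[OF STB(2,4)] STB(5) unfolding \<Omega>_def by auto
      define D where "D i = (a i - BB i) \<union> (BB i - a i)" for i
      have D\<mu>: "D i \<in> sets \<mu>" for i unfolding D_def using a\<mu> BB\<mu> by auto
      have incl: "((\<Union>i. a i) - B) \<union> (B - (\<Union>i. a i)) \<subseteq> ((\<Union>i. a i) - U N) \<union> (\<Union>i<N. D i)"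
        unfolding B_def U_def D_def by auto
      have "measure \<mu> (((\<Union>i. a i) - B) \<union> (B - (\<Union>i. a i))) \<le> measure \<mu> (((\<Union>i. a i) - U N) \<union> (\<Union>i<N. D i))"
        by (rule finite_measure_mono[OF incl]) (use a\<mu> U\<mu> D\<mu> in auto)
      also have "\<dots> \<le> measure \<mu> ((\<Union>i. a i) - U N) + measure \<mu> (\<Union>i<N. D i)"
        by (rule measure_Un_le) (use a\<mu> U\<mu> D\<mu> in auto)
      also have "measure \<mu> ((\<Union>i. a i) - U N) = measure \<mu> (\<Union>i. a i) - measure \<mu> (U N)"
        by (rule finite_measure_Diff) (use a\<mu> U\<mu> in \<open>auto simp: U_def\<close>)
      also have "measure \<mu> (\<Union>i<N. D i) \<le> (\<Sum>i<N. measure \<mu> (D i))"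
        by (rule measure_UNION_le) (use D\<mu> in auto)
      also have "(\<Sum>i<N. measure \<mu> (D i)) \<le> (\<Sum>i<N. \<eta>')"
        by (rule sum_mono) (use STB(6) in \<open>auto simp: D_def less_imp_le\<close>)
      also have "(\<Sum>i<N. \<eta>') = \<eta>/2" unfolding \<eta>'_def using Npos by simp
      finally have "measure \<mu> (((\<Union>i. a i) - B) \<union> (B - (\<Union>i. a i))) < \<eta>" using N by linarith
      then show "\<exists>S T B. finite S \<and> S \<subseteq> sets M1 \<and> finite T \<and> T \<subseteq> sets M2 \<and>
      B \<in> sigma_sets (space M1 \<times> space M2) (rects S T) \<and> measure \<mu> (((\<Union>i. a i) - B) \<union> (B - (\<Union>i. a i))) < \<eta>"
        using S T B by blast
    qed
  qed
qed


lemma sigma_rects_sets: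
  assumes "S \<subseteq> sets M1" "T \<subseteq> sets M2"
  shows "sets (sigma (space M1 \<times> space M2) (rects S T)) = sigma_sets (space M1 \<times> space M2) (rects S T)"
    "space (sigma (space M1 \<times> space M2) (rects S T)) = space M1 \<times> space M2"
  using rects_pow[OF assms] by (simp_all add: sets_measure_of space_measure_of_conv)

lemma meas_mono_rects:
  assumes "S' \<subseteq> sets M1" "T' \<subseteq> sets M2" "S \<subseteq> S'" "T \<subseteq> T'"
    and h: "h \<in> borel_measurable (sigma (space M1 \<times> space M2) (rects S T))"
  shows "h \<in> borel_measurable (sigma (space M1 \<times> space M2) (rects S' T'))"
proof -
  have ST: "S \<subseteq> sets M1" "T \<subseteq> sets M2" using assms by auto
  have "sigma_sets (space M1 \<times> space M2) (rects S T) \<subseteq> sigma_sets (space M1 \<times> space M2) (rects S' T')"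
    by (rule sigma_sets_subseteq[OF rects_mono[OF assms(3,4)]])
  then show ?thesis using h measurable_mono[of borel borel "sigma (space M1 \<times> space M2) (rects S T)" "sigma (space M1 \<times> space M2) (rects S' T')"]
    unfolding sigma_rects_sets[OF ST] sigma_rects_sets[OF assms(1,2)] by auto
qed

lemma rects_sub_mu:
  assumes sets_mu: "sets \<mu> = sets (M1 \<Otimes>\<^sub>M M2)" and "S \<subseteq> sets M1" "T \<subseteq> sets M2"
  shows "sigma_sets (space M1 \<times> space M2) (rects S T) \<subseteq> sets \<mu>"
    unfolding sets_mu sets_pair_measure
    using sigma_sets_subseteq[OF rects_mono[OF assms(2,3)]] unfolding rects_def by simp

lemma meas_rects_to_mu:
  assumes sets_mu: "sets \<mu> = sets (M1 \<Otimes>\<^sub>M M2)" and "S \<subseteq> sets M1" "T \<subseteq> sets M2"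
    and h: "h \<in> borel_measurable (sigma (space M1 \<times> space M2) (rects S T))"
  shows "h \<in> borel_measurable \<mu>"
proof -
  have sp: "space \<mu> = space M1 \<times> space M2"
    using sets_eq_imp_space_eq[OF sets_mu] by (simp add: space_pair_measure)
  have "sigma_sets (space M1 \<times> space M2) (rects S T) \<subseteq> sets \<mu>"
    unfolding sets_mu sets_pair_measure
    using sigma_sets_subseteq[OF rects_mono[OF assms(2,3)]] unfolding rects_def by simp
  then show ?thesis using h measurable_mono[of borel borel "sigma (space M1 \<times> space M2) (rects S T)" \<mu>]
    unfolding sigma_rects_sets[OF assms(2,3)] sp by auto
qed

definition approx_fun where
  "approx_fun M1 M2 \<mu> g \<longleftrightarrow> (\<forall>\<eta>>0. \<exists>S T h. finite S \<and> S \<subseteq> sets M1 \<and> finite T \<and> T \<subseteq> sets M2 \<and>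
      h \<in> borel_measurable (sigma (space M1 \<times> space M2) (rects S T)) \<and> integrable \<mu> h \<and>
      (\<integral>x. \<bar>g x - h x\<bar> \<partial>\<mu>) < \<eta>)"

lemma approx_funD:
  assumes "approx_fun M1 M2 \<mu> g" "\<eta> > 0"
  obtains S T h where "finite S" "S \<subseteq> sets M1" "finite T" "T \<subseteq> sets M2"
      "h \<in> borel_measurable (sigma (space M1 \<times> space M2) (rects S T))" "integrable \<mu> h"
      "(\<integral>x. \<bar>g x - h x\<bar> \<partial>\<mu>) < \<eta>"
proof -
  have "\<exists>S T h. finite S \<and> S \<subseteq> sets M1 \<and> finite T \<and> T \<subseteq> sets M2 \<and>
      h \<in> borel_measurable (sigma (space M1 \<times> space M2) (rects S T)) \<and> integrable \<mu> h \<and>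
      (\<integral>x. \<bar>g x - h x\<bar> \<partial>\<mu>) < \<eta>"
    using assms unfolding approx_fun_def by simp
  then show ?thesis using that by blast
qed

lemma approx_funI:
  assumes "\<And>\<eta>. \<eta> > 0 \<Longrightarrow> \<exists>S T h. finite S \<and> S \<subseteq> sets M1 \<and> finite T \<and> T \<subseteq> sets M2 \<and>
      h \<in> borel_measurable (sigma (space M1 \<times> space M2) (rects S T)) \<and> integrable \<mu> h \<and>
      (\<integral>x. \<bar>g x - h x\<bar> \<partial>\<mu>) < \<eta>"
  shows "approx_fun M1 M2 \<mu> g"
  using assms unfolding approx_fun_def by simp

lemma fun_approx:
  fixes f :: "_ \<Rightarrow> real"
  assumes sets_mu: "sets \<mu> = sets (M1 \<Otimes>\<^sub>M M2)" and fin: "finite_measure \<mu>"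
    and f: "integrable \<mu> f"
  shows "approx_fun M1 M2 \<mu> f"
  using f
proof (induct rule: integrable_induct)
  case (base A c)
  interpret finite_measure \<mu> by fact
  show ?case
  proof (rule approx_funI)
    fix \<eta> :: real assume "\<eta> > 0"
    then have e: "\<eta> / (\<bar>c\<bar> + 1) > 0" by simp
    obtain S T B where STB: "finite S" "S \<subseteq> sets M1" "finite T" "T \<subseteq> sets M2"
      "B \<in> sigma_sets (space M1 \<times> space M2) (rects S T)" "measure \<mu> ((A - B) \<union> (B - A)) < \<eta> / (\<bar>c\<bar> + 1)"
      by (rule approx_setD[OF set_approx[OF sets_mu fin base(1)] e])
    define h where "h x = indicator B x *\<^sub>R c" for x
    have Bs: "B \<in> sets (sigma (space M1 \<times> space M2) (rects S T))"
      using STB(5) sigma_rects_sets[OF STB(2,4)] by simp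
    have hm: "h \<in> borel_measurable (sigma (space M1 \<times> space M2) (rects S T))"
      unfolding h_def by (intro borel_measurable_scaleR borel_measurable_indicator[OF Bs] borel_measurable_const)
    have B\<mu>: "B \<in> sets \<mu>" using rects_sub_mu[OF sets_mu STB(2,4)] STB(5) by blast
    have "integrable \<mu> (indicator B :: _ \<Rightarrow> real)"
      by (rule integrable_real_indicator[OF B\<mu>]) (simp add: less_top[symmetric])
    then have hi: "integrable \<mu> h" unfolding h_def by (rule integrable_scaleR_left)
    define D where "D = (A - B) \<union> (B - A)"
    have D\<mu>: "D \<in> sets \<mu>" unfolding D_def using B\<mu> base(1) by auto
    have eq: "\<bar>indicator A x *\<^sub>R c - h x\<bar> = \<bar>c\<bar> * indicator D x" for x
      unfolding h_def D_def by (auto simp: indicator_def)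
    have "(\<integral>x. \<bar>indicator A x *\<^sub>R c - h x\<bar> \<partial>\<mu>) = \<bar>c\<bar> * measure \<mu> D"
      unfolding eq using D\<mu> by (simp add: sets.Int_space_eq2)
    also have "\<dots> \<le> \<bar>c\<bar> * (\<eta> / (\<bar>c\<bar> + 1))"
      using STB(6) unfolding D_def by (intro mult_left_mono) auto
    also have "\<dots> < \<eta>"
    proof -
      have "\<bar>c\<bar> * (\<eta> / (\<bar>c\<bar> + 1)) = \<eta> * (\<bar>c\<bar> / (\<bar>c\<bar> + 1))" by simp
      moreover have "\<bar>c\<bar> / (\<bar>c\<bar> + 1) < 1" by simp
      ultimately show ?thesis using \<open>\<eta> > 0\<close> by (metis mult.right_neutral mult_strict_left_mono)
    qed
    finally show "\<exists>S T h. finite S \<and> S \<subseteq> sets M1 \<and> finite T \<and> T \<subseteq> sets M2 \<and>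
      h \<in> borel_measurable (sigma (space M1 \<times> space M2) (rects S T)) \<and> integrable \<mu> h \<and>
      (\<integral>x. \<bar>indicator A x *\<^sub>R c - h x\<bar> \<partial>\<mu>) < \<eta>"
      using STB(1-4) hm hi by blast
  qed
next
  case (add f g)
  show ?case
  proof (rule approx_funI)
    fix \<eta> :: real assume "\<eta> > 0"
    then have e: "\<eta>/2 > 0" by simp
    obtain S1 T1 h1 where 1: "finite S1" "S1 \<subseteq> sets M1" "finite T1" "T1 \<subseteq> sets M2"
      "h1 \<in> borel_measurable (sigma (space M1 \<times> space M2) (rects S1 T1))" "integrable \<mu> h1"
      "(\<integral>x. \<bar>f x - h1 x\<bar> \<partial>\<mu>) < \<eta>/2"
      by (rule approx_funD[OF add(2) e])
    obtain S2 T2 h2 where 2: "finite S2" "S2 \<subseteq> sets M1" "finite T2" "T2 \<subseteq> sets M2"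
      "h2 \<in> borel_measurable (sigma (space M1 \<times> space M2) (rects S2 T2))" "integrable \<mu> h2"
      "(\<integral>x. \<bar>g x - h2 x\<bar> \<partial>\<mu>) < \<eta>/2"
      by (rule approx_funD[OF add(4) e])
    have S: "finite (S1 \<union> S2)" "S1 \<union> S2 \<subseteq> sets M1" using 1 2 by auto
    have T: "finite (T1 \<union> T2)" "T1 \<union> T2 \<subseteq> sets M2" using 1 2 by auto
    have m1: "h1 \<in> borel_measurable (sigma (space M1 \<times> space M2) (rects (S1 \<union> S2) (T1 \<union> T2)))"
      by (rule meas_mono_rects[OF S(2) T(2) _ _ 1(5)]) auto
    have m2: "h2 \<in> borel_measurable (sigma (space M1 \<times> space M2) (rects (S1 \<union> S2) (T1 \<union> T2)))"
      by (rule meas_mono_rects[OF S(2) T(2) _ _ 2(5)]) auto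
    have hm: "(\<lambda>x. h1 x + h2 x) \<in> borel_measurable (sigma (space M1 \<times> space M2) (rects (S1 \<union> S2) (T1 \<union> T2)))"
      using m1 m2 by measurable
    have hi: "integrable \<mu> (\<lambda>x. h1 x + h2 x)" using 1(6) 2(6) by auto
    have "(\<integral>x. \<bar>(f x + g x) - (h1 x + h2 x)\<bar> \<partial>\<mu>) \<le> (\<integral>x. \<bar>f x - h1 x\<bar> + \<bar>g x - h2 x\<bar> \<partial>\<mu>)"
      by (rule integral_mono) (use add(1,3) 1(6) 2(6) in auto)
    also have "\<dots> = (\<integral>x. \<bar>f x - h1 x\<bar> \<partial>\<mu>) + (\<integral>x. \<bar>g x - h2 x\<bar> \<partial>\<mu>)"
      by (rule Bochner_Integration.integral_add) (use add(1,3) 1(6) 2(6) in auto)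
    also have "\<dots> < \<eta>" using 1(7) 2(7) by linarith
    finally show "\<exists>S T h. finite S \<and> S \<subseteq> sets M1 \<and> finite T \<and> T \<subseteq> sets M2 \<and>
      h \<in> borel_measurable (sigma (space M1 \<times> space M2) (rects S T)) \<and> integrable \<mu> h \<and>
      (\<integral>x. \<bar>(f x + g x) - h x\<bar> \<partial>\<mu>) < \<eta>"
      using S T hm hi by blast
  qed
next
  case (lim f s)
  have lim0: "(\<lambda>i. \<integral>x. \<bar>s i x - f x\<bar> \<partial>\<mu>) \<longlonglongrightarrow> (\<integral>x. 0 \<partial>\<mu>)"
  proof (rule integral_dominated_convergence[where w="\<lambda>x. 3 * \<bar>f x\<bar>"])
    show "(\<lambda>x. 0::real) \<in> borel_measurable \<mu>" by simp
    show "(\<lambda>x. \<bar>s i x - f x\<bar>) \<in> borel_measurable \<mu>" for i using lim(1)[of i] lim(5) by auto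
    show "integrable \<mu> (\<lambda>x. 3 * \<bar>f x\<bar>)" using lim(5) by auto
    show "AE x in \<mu>. (\<lambda>i. \<bar>s i x - f x\<bar>) \<longlonglongrightarrow> 0"
    proof (rule AE_I2)
      fix x assume "x \<in> space \<mu>"
      then have "(\<lambda>i. \<bar>s i x - f x\<bar>) \<longlonglongrightarrow> \<bar>f x - f x\<bar>"
        using lim(3) by (intro tendsto_intros) auto
      then show "(\<lambda>i. \<bar>s i x - f x\<bar>) \<longlonglongrightarrow> 0" by simp
    qed
    show "AE x in \<mu>. norm \<bar>s i x - f x\<bar> \<le> 3 * \<bar>f x\<bar>" for i
    proof (rule AE_I2)
      fix x assume "x \<in> space \<mu>"
      then have "\<bar>s i x\<bar> \<le> 2 * \<bar>f x\<bar>" using lim(4) by auto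
      then show "norm \<bar>s i x - f x\<bar> \<le> 3 * \<bar>f x\<bar>" by simp
    qed
  qed
  show ?case
  proof (rule approx_funI)
    fix \<eta> :: real assume "\<eta> > 0"
    then have e: "\<eta>/2 > 0" by simp
    obtain i where i: "norm ((\<integral>x. \<bar>s i x - f x\<bar> \<partial>\<mu>) - 0) < \<eta>/2"
      using LIMSEQ_D[OF lim0 e] by auto
    obtain S T h where 1: "finite S" "S \<subseteq> sets M1" "finite T" "T \<subseteq> sets M2"
      "h \<in> borel_measurable (sigma (space M1 \<times> space M2) (rects S T))" "integrable \<mu> h"
      "(\<integral>x. \<bar>s i x - h x\<bar> \<partial>\<mu>) < \<eta>/2"
      by (rule approx_funD[OF lim(2) e])
    have "(\<integral>x. \<bar>f x - h x\<bar> \<partial>\<mu>) \<le> (\<integral>x. \<bar>s i x - f x\<bar> + \<bar>s i x - h x\<bar> \<partial>\<mu>)"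
      by (rule integral_mono) (use lim(1,5) 1(6) in auto)
    also have "\<dots> = (\<integral>x. \<bar>s i x - f x\<bar> \<partial>\<mu>) + (\<integral>x. \<bar>s i x - h x\<bar> \<partial>\<mu>)"
      by (rule Bochner_Integration.integral_add) (use lim(1,5) 1(6) in auto)
    also have "\<dots> < \<eta>" using 1(7) i by simp
    finally show "\<exists>S T h. finite S \<and> S \<subseteq> sets M1 \<and> finite T \<and> T \<subseteq> sets M2 \<and>
      h \<in> borel_measurable (sigma (space M1 \<times> space M2) (rects S T)) \<and> integrable \<mu> h \<and>
      (\<integral>x. \<bar>f x - h x\<bar> \<partial>\<mu>) < \<eta>"
      using 1 by blast
  qed
qed


lemma cond_exp_L1_contr:
  assumes "finite_measure_subalgebra \<mu> F" and X: "integrable \<mu> (X :: _ \<Rightarrow> real)"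
  shows "(\<integral>x. \<bar>real_cond_exp \<mu> F X x\<bar> \<partial>\<mu>) \<le> (\<integral>x. \<bar>X x\<bar> \<partial>\<mu>)"
proof -
  interpret finite_measure_subalgebra \<mu> F by fact
  have cv: "convex_on UNIV (\<lambda>x::real. \<bar>x\<bar>)" using convex_on_dist[of UNIV "0::real"] by (simp add: dist_real_def)
  have ae: "AE x in \<mu>. \<bar>real_cond_exp \<mu> F X x\<bar> \<le> real_cond_exp \<mu> F (\<lambda>x. \<bar>X x\<bar>) x"
    by (rule real_cond_exp_jensens_inequality(2)[where I=UNIV and q="\<lambda>x. \<bar>x\<bar>" and X=X])
      (use X cv in auto)
  have "(\<integral>x. \<bar>real_cond_exp \<mu> F X x\<bar> \<partial>\<mu>) \<le> (\<integral>x. real_cond_exp \<mu> F (\<lambda>x. \<bar>X x\<bar>) x \<partial>\<mu>)"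
    by (rule integral_mono_AE[OF _ _ ae]) (use X real_cond_exp_int(1) in auto)
  also have "\<dots> = (\<integral>x. \<bar>X x\<bar> \<partial>\<mu>)" using real_cond_exp_int(2) X by auto
  finally show ?thesis .
qed

theorem corollary1:
  fixes M1 :: "'a measure" and M2 :: "'b measure"
    and \<mu> \<nu> :: "('a \<times> 'b) measure" and f :: "'a \<times> 'b \<Rightarrow> real" and \<epsilon> :: real
  assumes sets_mu: "sets \<mu> = sets (M1 \<Otimes>\<^sub>M M2)"
    and fin_mu: "finite_measure \<mu>"
    and int_f: "integrable \<mu> f"
    and sets_nu: "sets \<nu> = sets (M1 \<Otimes>\<^sub>M M2)"
    and fin_nu: "finite_measure \<nu>"
    and ac: "absolutely_continuous \<mu> \<nu>"
    and eps: "\<epsilon> > 0"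
  shows "\<exists>C D. subalgebra M1 C \<and> finite (sets C) \<and> subalgebra M2 D \<and> finite (sets D) \<and>
           (\<forall>F. subalgebra \<mu> F \<and> sets (C \<Otimes>\<^sub>M D) \<subseteq> sets F \<longrightarrow>
              measure \<nu> {z \<in> space \<nu>. \<bar>real_cond_exp \<mu> F f z - f z\<bar> \<ge> \<epsilon>} < \<epsilon>)"
proof -
  have sp_mu: "space \<mu> = space M1 \<times> space M2"
    using sets_eq_imp_space_eq[OF sets_mu] by (simp add: space_pair_measure)
  have sets_nm: "sets \<nu> = sets \<mu>" using sets_mu sets_nu by simp
  have sp_nu: "space \<nu> = space \<mu>" using sets_eq_imp_space_eq[OF sets_nm] .
  obtain \<delta> where \<delta>: "\<delta> > 0" and dl: "\<And>A. A \<in> sets \<mu> \<Longrightarrow> measure \<mu> A < \<delta> \<Longrightarrow> measure \<nu> A < \<epsilon>"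
    using ac_eps_delta[OF fin_mu fin_nu sets_nm ac eps] by blast
  define \<eta> where "\<eta> = \<delta> * \<epsilon> / 2"
  have \<eta>: "\<eta> > 0" unfolding \<eta>_def using \<delta> eps by simp
  obtain S T h where STh: "finite S" "S \<subseteq> sets M1" "finite T" "T \<subseteq> sets M2"
      "h \<in> borel_measurable (sigma (space M1 \<times> space M2) (rects S T))" "integrable \<mu> h"
      "(\<integral>x. \<bar>f x - h x\<bar> \<partial>\<mu>) < \<eta>"
    by (rule approx_funD[OF fun_approx[OF sets_mu fin_mu int_f] \<eta>])
  define C where "C = sigma (space M1) S"
  define D where "D = sigma (space M2) T"
  have Sp: "S \<subseteq> Pow (space M1)" using STh(2) sets.sets_into_space by blast
  have Tp: "T \<subseteq> Pow (space M2)" using STh(4) sets.sets_into_space by blast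
  have setsC: "sets C = sigma_sets (space M1) S" and spC: "space C = space M1"
    unfolding C_def using Sp by (simp_all add: sets_measure_of space_measure_of_conv)
  have setsD: "sets D = sigma_sets (space M2) T" and spD: "space D = space M2"
    unfolding D_def using Tp by (simp_all add: sets_measure_of space_measure_of_conv)
  have subC: "subalgebra M1 C" unfolding subalgebra_def setsC spC
    using sets.sigma_sets_subset[OF STh(2)] by simp
  have subD: "subalgebra M2 D" unfolding subalgebra_def setsD spD
    using sets.sigma_sets_subset[OF STh(4)] by simp
  have finC: "finite (sets C)" unfolding setsC by (rule finite_sigma_sets_fin[OF STh(1) Sp])
  have finD: "finite (sets D)" unfolding setsD by (rule finite_sigma_sets_fin[OF STh(3) Tp])
  have rCD: "sigma_sets (space M1 \<times> space M2) (rects S T) \<subseteq> sets (C \<Otimes>\<^sub>M D)"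
  proof -
    have "rects S T \<subseteq> {a \<times> b | a b. a \<in> sets C \<and> b \<in> sets D}"
      unfolding rects_def setsC setsD by (auto intro: sigma_sets.Basic)
    then show ?thesis unfolding sets_pair_measure spC spD by (rule sigma_sets_subseteq)
  qed
  have main: "measure \<nu> {z \<in> space \<nu>. \<bar>real_cond_exp \<mu> F f z - f z\<bar> \<ge> \<epsilon>} < \<epsilon>"
    if F: "subalgebra \<mu> F" "sets (C \<Otimes>\<^sub>M D) \<subseteq> sets F" for F
  proof -
    have fsub: "finite_measure_subalgebra \<mu> F"
      using fin_mu F(1) by (simp add: finite_measure_subalgebra_def finite_measure_subalgebra_axioms_def)
    interpret Fs: finite_measure_subalgebra \<mu> F by (rule fsub)
    have spF: "space F = space M1 \<times> space M2" using F(1) sp_mu unfolding subalgebra_def by simp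
    have hF: "h \<in> borel_measurable F"
      using STh(5) measurable_mono[of borel borel "sigma (space M1 \<times> space M2) (rects S T)" F]
        rCD F(2) unfolding sigma_rects_sets[OF STh(2,4)] spF by auto
    have e1: "AE x in \<mu>. real_cond_exp \<mu> F (\<lambda>x. f x - h x) x = real_cond_exp \<mu> F f x - real_cond_exp \<mu> F h x"
      by (rule Fs.real_cond_exp_diff[OF int_f STh(6)])
    have e2: "AE x in \<mu>. real_cond_exp \<mu> F h x = h x"
      by (rule Fs.real_cond_exp_F_meas[OF STh(6) hF])
    have ae: "AE x in \<mu>. \<bar>real_cond_exp \<mu> F f x - f x\<bar> \<le> \<bar>real_cond_exp \<mu> F (\<lambda>x. f x - h x) x\<bar> + \<bar>f x - h x\<bar>"
      using e1 e2 by eventually_elim auto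
    have ifh: "integrable \<mu> (\<lambda>x. f x - h x)" using int_f STh(6) by auto
    have iE: "integrable \<mu> (real_cond_exp \<mu> F f)" by (rule Fs.real_cond_exp_int(1)[OF int_f])
    have iE2: "integrable \<mu> (real_cond_exp \<mu> F (\<lambda>x. f x - h x))" by (rule Fs.real_cond_exp_int(1)[OF ifh])
    have iu: "integrable \<mu> (\<lambda>x. \<bar>real_cond_exp \<mu> F f x - f x\<bar>)" using iE int_f by auto
    have "(\<integral>x. \<bar>real_cond_exp \<mu> F f x - f x\<bar> \<partial>\<mu>) \<le>
        (\<integral>x. \<bar>real_cond_exp \<mu> F (\<lambda>x. f x - h x) x\<bar> + \<bar>f x - h x\<bar> \<partial>\<mu>)"
      by (rule integral_mono_AE[OF iu _ ae]) (use iE2 ifh in auto)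
    also have "\<dots> = (\<integral>x. \<bar>real_cond_exp \<mu> F (\<lambda>x. f x - h x) x\<bar> \<partial>\<mu>) + (\<integral>x. \<bar>f x - h x\<bar> \<partial>\<mu>)"
      by (rule Bochner_Integration.integral_add) (use iE2 ifh in auto)
    also have "\<dots> \<le> (\<integral>x. \<bar>f x - h x\<bar> \<partial>\<mu>) + (\<integral>x. \<bar>f x - h x\<bar> \<partial>\<mu>)"
      using cond_exp_L1_contr[OF fsub ifh] by simp
    also have "\<dots> < 2 * \<eta>" using STh(7) by simp
    finally have I: "(\<integral>x. \<bar>real_cond_exp \<mu> F f x - f x\<bar> \<partial>\<mu>) < 2 * \<eta>" .
    have "measure \<mu> {x\<in>space \<mu>. \<bar>real_cond_exp \<mu> F f x - f x\<bar> \<ge> \<epsilon>} \<le> (\<integral>x. \<bar>real_cond_exp \<mu> F f x - f x\<bar> \<partial>\<mu>) / \<epsilon>"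
      by (rule integral_Markov_inequality_measure[OF iu sets.top _ eps]) simp
    also have "\<dots> < (2 * \<eta>) / \<epsilon>" using I eps by (simp add: divide_strict_right_mono)
    also have "\<dots> = \<delta>" unfolding \<eta>_def using eps by simp
    finally have lt: "measure \<mu> {x\<in>space \<mu>. \<bar>real_cond_exp \<mu> F f x - f x\<bar> \<ge> \<epsilon>} < \<delta>" .
    have fm: "f \<in> borel_measurable \<mu>" using int_f by auto
    have ms: "{x\<in>space \<mu>. \<bar>real_cond_exp \<mu> F f x - f x\<bar> \<ge> \<epsilon>} \<in> sets \<mu>"
      using fm borel_measurable_cond_exp2[of \<mu> F f] by measurable
    show ?thesis using dl[OF ms lt] unfolding sp_nu .
  qed
  show ?thesis
    using subC finC subD finD main by blast
qed

end
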